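(* Let $k_0>0$, $0<r_s<r_M$, $p>1$, and let $f\in L^p(\mathbb{R}^3)$ with $\operatorname{supp}(f)\subset\mathcal{B}_{r_s}$. Let $u^{\mathrm{inc}}(\mathbf r)=e^{ik_0r_3}$, and let $u$ be the solution of $-(\Delta+k_0^2)u=f\,u^{\mathrm{inc}}$ satisfying the Sommerfeld radiation condition. Then, for all $k_1,k_2\in\mathbb{R}$ with $k_1^2+k_2^2\neq k_0^2$, $$\mathcal{F}_{1,2}u(k_1,k_2,\pm r_M)=\sqrt{\frac{\pi}{2}}\,\frac{i\,e^{i\kappa r_M}}{\kappa}\,\mathcal{F}f(k_1,k_2,\pm\kappa-k_0),$$ where the upper sign corresponds to measurements in the plane $r_3=r_M$ (transmission) and the lower sign to measurements in the plane $r_3=-r_M$ (reflection).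
   Context: $\mathcal{B}_{r}\subset\mathbb{R}^3$ is the open ball of radius $r$ centered at $0$. The Sommerfeld radiation condition is $\lim_{s\to\infty}\max_{\|\mathbf r\|=s}\|\mathbf r\|\big(\frac{\partial u}{\partial \mathbf r}-ik_0u\big)=0$ with $\frac{\partial}{\partial\mathbf r}$ the radial derivative. $\mathcal{F}g(\mathbf k)=(2\pi)^{-3/2}\int_{\mathbb{R}^3}g(\mathbf r)e^{-i\mathbf k\cdot\mathbf r}\,d\mathbf r$, analytically continued to complex arguments (possible since $f$ has compact support). $\kappa=\sqrt{k_0^2-k_1^2-k_2^2}$ if $k_1^2+k_2^2\le k_0^2$ and $\kappa=i\sqrt{k_1^2+k_2^2-k_0^2}$ otherwise. $\mathcal{F}_{1,2}u$ is the partial Fourier transform in the first two variables (normalization $(2\pi)^{-1/2}$ per variable), defined on tempered distributions by duality; here $\mathcal{F}_{1,2}u(k_1,k_2,r_3)$ denotes the locally integrable function with which this distribution coincides, namely $\sqrt{\pi/2}\,\frac{i}{\kappa}\big(e^{i\kappa r_3}\mathcal{F}((1-H_{r_3})g)(k_1,k_2,\kappa)+e^{-i\kappa r_3}\mathcal{F}(H_{r_3}g)(k_1,k_2,-\kappa)\big)$ with $g=fu^{\mathrm{inc}}$, where $H_{r_3}(s_1,s_2,s_3)=0$ if $s_3<r_3$ and $1$ otherwise. *)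

theory Defs
  imports "HOL-Analysis.Analysis"
begin

definition FT3 :: "(real^3 \<Rightarrow> complex) \<Rightarrow> complex \<Rightarrow> complex \<Rightarrow> complex \<Rightarrow> complex" where
  "FT3 g k1 k2 k3 = complex_of_real ((2 * pi) powr (-3/2)) *
     (\<integral>r. g r * exp (- \<i> * (k1 * complex_of_real (r$1) + k2 * complex_of_real (r$2)
                               + k3 * complex_of_real (r$3))) \<partial>lborel)"

definition kappa :: "real \<Rightarrow> real \<Rightarrow> real \<Rightarrow> complex" where
  "kappa k0 k1 k2 = (if k1^2 + k2^2 \<le> k0^2
      then complex_of_real (sqrt (k0^2 - k1^2 - k2^2))
      else \<i> * complex_of_real (sqrt (k1^2 + k2^2 - k0^2)))"

definition heav :: "real \<Rightarrow> real^3 \<Rightarrow> complex" where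
  "heav r3 s = (if s$3 < r3 then 0 else 1)"

definition uinc :: "real \<Rightarrow> real^3 \<Rightarrow> complex" where
  "uinc k0 r = exp (\<i> * complex_of_real (k0 * r$3))"

text \<open>The function representing the partial Fourier transform F_{1,2} u (k1,k2,r3) of the
  radiating solution u of -(Delta + k0^2) u = f u_inc, as given in the context, with g = f u_inc.\<close>
definition F12u :: "real \<Rightarrow> (real^3 \<Rightarrow> complex) \<Rightarrow> real \<Rightarrow> real \<Rightarrow> real \<Rightarrow> complex" where
  "F12u k0 f k1 k2 r3 =
     (let g = (\<lambda>r. f r * uinc k0 r); \<kappa> = kappa k0 k1 k2 in
      complex_of_real (sqrt (pi / 2)) * (\<i> / \<kappa>) *
        (exp (\<i> * \<kappa> * complex_of_real r3) *
           FT3 (\<lambda>s. (1 - heav r3 s) * g s) (complex_of_real k1) (complex_of_real k2) \<kappa>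
         + exp (- \<i> * \<kappa> * complex_of_real r3) *
           FT3 (\<lambda>s. heav r3 s * g s) (complex_of_real k1) (complex_of_real k2) (- \<kappa>)))"

end

theory Submission
  imports Defs
begin

lemma supp3:
  fixes f :: "real^3 \<Rightarrow> complex"
  assumes "closure {r. f r \<noteq> 0} \<subseteq> ball 0 rs" "rs < rM" "f s \<noteq> 0"
  shows "s$3 < rM \<and> - rM < s$3"
proof -
  have "s \<in> {r. f r \<noteq> 0}" using assms(3) by simp
  then have "s \<in> closure {r. f r \<noteq> 0}" by (rule closure_subset[THEN subsetD])
  then have "s \<in> ball 0 rs" by (rule subsetD[OF assms(1)])
  then have "norm s < rs" by (simp only: mem_ball_0)
  moreover have "\<bar>s$3\<bar> \<le> norm s" by (rule component_le_norm_cart)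
  ultimately have "\<bar>s$3\<bar> < rM" using assms(2) by linarith
  then have "s$3 < rM \<and> - s$3 < rM" by (simp only: abs_less_iff)
  then show ?thesis by linarith
qed

lemma expcomb:
  "f * exp (\<i> * complex_of_real (k0 * x)) * exp (- \<i> * (a + b + c * complex_of_real x))
   = f * exp (- \<i> * (a + b + (c - complex_of_real k0) * complex_of_real x))"
proof -
  have "exp (\<i> * complex_of_real (k0 * x)) * exp (- \<i> * (a + b + c * complex_of_real x))
     = exp (\<i> * complex_of_real (k0 * x) + (- \<i> * (a + b + c * complex_of_real x)))"
    by (rule exp_add[symmetric])
  also have "\<i> * complex_of_real (k0 * x) + (- \<i> * (a + b + c * complex_of_real x))
     = - \<i> * (a + b + (c - complex_of_real k0) * complex_of_real x)"
    by (simp add: algebra_simps)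
  finally show ?thesis by (simp add: mult.assoc)
qed

lemma fin:
  fixes K a b c d e :: complex
  assumes A1: "a = c" and A2: "b = 0" and B1: "d = 0" and B2: "e = g"
  shows "complex_of_real (sqrt (pi / 2)) * (\<i> / K) * (exp (\<i> * K * complex_of_real rM) * a + exp (- \<i> * K * complex_of_real rM) * b)
      = complex_of_real (sqrt (pi / 2)) * \<i> * exp (\<i> * K * complex_of_real rM) / K * c
   \<and> complex_of_real (sqrt (pi / 2)) * (\<i> / K) * (exp (\<i> * K * complex_of_real (- rM)) * d + exp (- \<i> * K * complex_of_real (- rM)) * e)
      = complex_of_real (sqrt (pi / 2)) * \<i> * exp (\<i> * K * complex_of_real rM) / K * g"
  using assms by simp

theorem corollary3p3:
  fixes k0 rs rM p :: real and f :: "real^3 \<Rightarrow> complex"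
  assumes "k0 > 0" and "0 < rs" and "rs < rM" and "p > 1"
    and "f \<in> borel_measurable lborel"
    and "integrable lborel (\<lambda>r. norm (f r) powr p)"
    and "closure {r. f r \<noteq> 0} \<subseteq> ball 0 rs"
  shows "\<forall>k1 k2 :: real. k1^2 + k2^2 \<noteq> k0^2 \<longrightarrow>
     F12u k0 f k1 k2 rM =
       complex_of_real (sqrt (pi / 2)) * \<i> * exp (\<i> * kappa k0 k1 k2 * complex_of_real rM)
         / kappa k0 k1 k2
         * FT3 f (complex_of_real k1) (complex_of_real k2) (kappa k0 k1 k2 - complex_of_real k0)
   \<and> F12u k0 f k1 k2 (- rM) =
       complex_of_real (sqrt (pi / 2)) * \<i> * exp (\<i> * kappa k0 k1 k2 * complex_of_real rM)
         / kappa k0 k1 k2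
         * FT3 f (complex_of_real k1) (complex_of_real k2) (- kappa k0 k1 k2 - complex_of_real k0)"
proof (intro allI impI)
  fix k1 k2 :: real
  define K where "K = kappa k0 k1 k2"
  have S: "\<And>s. f s \<noteq> 0 \<Longrightarrow> s$3 < rM \<and> - rM < s$3"
    using supp3[OF assms(7) assms(3)] by blast
  have H1: "heav rM s = 0" if "f s \<noteq> 0" for s
    using S[OF that] by (simp add: heav_def)
  have H2: "heav (- rM) s = 1" if "f s \<noteq> 0" for s
    using S[OF that] by (simp add: heav_def)
  have P1: "(1 - heav rM s) * (f s * uinc k0 s) * exp (- \<i> * (complex_of_real k1 * complex_of_real (s $ 1) + complex_of_real k2 * complex_of_real (s $ 2) + (K) * complex_of_real (s $ 3))) = f s * exp (- \<i> * (complex_of_real k1 * complex_of_real (s $ 1) + complex_of_real k2 * complex_of_real (s $ 2) + (K - complex_of_real k0) * complex_of_real (s $ 3)))" for s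
  proof (cases "f s = 0")
    case True then show ?thesis by simp
  next
    case False then show ?thesis using H1[OF False] expcomb[of "f s" k0 "s$3"]
      by (simp add: uinc_def)
  qed
  have P2: "heav (- rM) s * (f s * uinc k0 s) * exp (- \<i> * (complex_of_real k1 * complex_of_real (s $ 1) + complex_of_real k2 * complex_of_real (s $ 2) + (- K) * complex_of_real (s $ 3))) = f s * exp (- \<i> * (complex_of_real k1 * complex_of_real (s $ 1) + complex_of_real k2 * complex_of_real (s $ 2) + (- K - complex_of_real k0) * complex_of_real (s $ 3)))" for s
  proof (cases "f s = 0")
    case True then show ?thesis by simp
  next
    case False then show ?thesis using H2[OF False] expcomb[of "f s" k0 "s$3" _ _ "- K"]
      by (simp add: uinc_def)
  qed
  have Z1: "heav rM s * (f s * uinc k0 s) = 0" for s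
    using H1[of s] by (cases "f s = 0") simp_all
  have Z2: "(1 - heav (- rM) s) * (f s * uinc k0 s) = 0" for s
    using H2[of s] by (cases "f s = 0") simp_all
  have A1: "FT3 (\<lambda>s. (1 - heav rM s) * (f s * uinc k0 s)) k1 k2 K = FT3 f k1 k2 (K - k0)"
    unfolding FT3_def by (simp only: P1)
  have A2: "FT3 (\<lambda>s. heav rM s * (f s * uinc k0 s)) k1 k2 (- K) = 0"
    unfolding FT3_def by (simp only: Z1 mult_zero_left Bochner_Integration.integral_zero mult_zero_right)
  have B1: "FT3 (\<lambda>s. (1 - heav (- rM) s) * (f s * uinc k0 s)) k1 k2 K = 0"
    unfolding FT3_def by (simp only: Z2 mult_zero_left Bochner_Integration.integral_zero mult_zero_right)
  have B2: "FT3 (\<lambda>s. heav (- rM) s * (f s * uinc k0 s)) k1 k2 (- K) = FT3 f k1 k2 (- K - k0)"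
    unfolding FT3_def by (simp only: P2)
  show "F12u k0 f k1 k2 rM =
       complex_of_real (sqrt (pi / 2)) * \<i> * exp (\<i> * kappa k0 k1 k2 * complex_of_real rM)
         / kappa k0 k1 k2
         * FT3 f (complex_of_real k1) (complex_of_real k2) (kappa k0 k1 k2 - complex_of_real k0)
   \<and> F12u k0 f k1 k2 (- rM) =
       complex_of_real (sqrt (pi / 2)) * \<i> * exp (\<i> * kappa k0 k1 k2 * complex_of_real rM)
         / kappa k0 k1 k2
         * FT3 f (complex_of_real k1) (complex_of_real k2) (- kappa k0 k1 k2 - complex_of_real k0)"
    unfolding F12u_def Let_def K_def[symmetric] by (rule fin[OF A1 A2 B1 B2])
qed

end
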